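(* Let $n=p^k$, where $p$ is an odd prime and $k>2$ is an integer, and let $G=\langle p^{k-1}-1\rangle$ be the subgroup of $\mathbb{Z}_n^\times$ generated by $p^{k-1}-1$. Then the coset index function $f_G$ is a $\left(p^k,\frac{2p^{k-1}-p^{k-2}+1}{2},\{1,p,p^k-p^{k-1}+1\}\right)$ zero-difference function.
   Context: For a subgroup $G$ of $\mathbb{Z}_n^\times$ and $r\in\mathbb{Z}_n$, the coset $rG=\{rg\mid g\in G\}$; these cosets partition $\mathbb{Z}_n$, forming a set $D_G$. The coset index function induced by $G$ is $f_G:\mathbb{Z}_n\to\mathbb{Z}_{|D_G|}$, $f_G(x)=h_G(C_x)$, where $C_x$ is the coset containing $x$ and $h_G:D_G\to\mathbb{Z}_{|D_G|}$ is a fixed bijection. A function $f:A\to B$ between finite abelian groups is an $(n,m,S)$ zero-difference function if $n=|A|$, $m=|f(A)|$, and for every nonzero $a\in A$, $|\{x\in A\mid f(x+a)=f(x)\}|\in S$. Here $A=(\mathbb{Z}_n,+)$. *)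

theory Defs
  imports Main "HOL-Computational_Algebra.Primes"
begin

text \<open>Z_n is modelled by the residues {0..<n} (type nat) with arithmetic mod n.\<close>

text \<open>Subgroup of Z_n^x generated by a unit g: in a finite group this is the set of
  all nonnegative powers of g.\<close>
definition cyc_subgroup :: "nat \<Rightarrow> nat \<Rightarrow> nat set" where
  "cyc_subgroup n g = {(g ^ i) mod n | i. True}"

definition coset_of :: "nat \<Rightarrow> nat set \<Rightarrow> nat \<Rightarrow> nat set" where
  "coset_of n G r = {(r * g) mod n | g. g \<in> G}"

definition cosets_D :: "nat \<Rightarrow> nat set \<Rightarrow> nat set set" where
  "cosets_D n G = {coset_of n G r | r. r < n}"

definition coset_index_fun :: "nat \<Rightarrow> nat set \<Rightarrow> (nat set \<Rightarrow> nat) \<Rightarrow> nat \<Rightarrow> nat" where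
  "coset_index_fun n G h x = h (coset_of n G x)"

definition zero_difference_fun :: "nat \<Rightarrow> nat \<Rightarrow> nat set \<Rightarrow> (nat \<Rightarrow> nat) \<Rightarrow> bool" where
  "zero_difference_fun n m S f \<longleftrightarrow>
     card (f ` {0..<n}) = m \<and>
     (\<forall>a \<in> {0..<n}. a \<noteq> 0 \<longrightarrow>
        card {x \<in> {0..<n}. f ((x + a) mod n) = f x} \<in> S)"

end

theory Submission
  imports Defs "HOL-Number_Theory.Cong"
begin

lemma pow_lin_cong:
  fixes n q c :: int
  assumes "n dvd q^2"
  shows "n dvd (1 + c*q)^i - (1 + int i*c*q)"
proof (induction i)
  case 0 then show ?case by simp
next
  case (Suc i)
  then obtain t where t: "(1 + c*q)^i = (1 + int i*c*q) + n*t" by (metis dvd_def add_diff_cancel_left' diff_add_cancel)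
  obtain s where s: "q^2 = n*s" using assms by (auto simp: dvd_def)
  have "(1 + c*q)^Suc i - (1 + int (Suc i)*c*q) = ((1 + int i*c*q) + n*t) * (1 + c*q) - (1 + int (Suc i)*c*q)"
    using t by simp
  also have "\<dots> = n * (t*(1+c*q) + int i * c*c*s)"
    using s by (simp add: algebra_simps power2_eq_square)
  finally show ?case by simp
qed

lemma dv2: "(A::int) = B + C*D \<Longrightarrow> m dvd B \<Longrightarrow> m dvd D \<Longrightarrow> m dvd A"
  by (simp add: dvd_add)
lemma dv3: "(A::int) = B + C*D + E \<Longrightarrow> m dvd B \<Longrightarrow> m dvd D \<Longrightarrow> m dvd E \<Longrightarrow> m dvd A"
  by (simp add: dvd_add)
lemma dv3m: "(A::int) = B + C*D - E \<Longrightarrow> m dvd B \<Longrightarrow> m dvd D \<Longrightarrow> m dvd E \<Longrightarrow> m dvd A"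
  by (simp add: dvd_add dvd_diff)
lemma dvs: "(A::int) = B + C \<Longrightarrow> m dvd B \<Longrightarrow> m dvd C \<Longrightarrow> m dvd A"
  by (simp add: dvd_add)
lemma dvm: "(A::int) = B - C \<Longrightarrow> m dvd B \<Longrightarrow> m dvd C \<Longrightarrow> m dvd A"
  by (simp add: dvd_diff)

locale zd =
  fixes p k n q r :: nat
  assumes pp: "prime p" and op: "odd p" and k2: "k > 2"
    and n_def: "n = p^k" and q_def: "q = p^(k-1)" and r_def: "r = p^(k-2)"
begin

lemma p3: "p \<ge> 3"
  using pp op prime_ge_2_nat[OF pp] by (metis One_nat_def Suc_1 le_antisym not_less_eq_eq numeral_3_eq_3 odd_numeral even_numeral) 

lemma nq: "n = p * q"
proof -
  have "k = Suc (k - 1)" using k2 by simp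
  then have "p^k = p * p^(k-1)" by (metis power_Suc)
  then show ?thesis unfolding n_def q_def .
qed
lemma qr: "q = p * r"
proof -
  have "k - 1 = Suc (k - 2)" using k2 by simp
  then have "p^(k-1) = p * p^(k-2)" by (metis power_Suc)
  then show ?thesis unfolding r_def q_def .
qed
lemma r_pos: "r \<ge> 3"
proof -
  have "p^1 \<le> p^(k-2)" by (rule power_increasing) (use k2 p3 in auto)
  then show ?thesis unfolding r_def using p3 by simp
qed
lemma q3: "q \<ge> 3"
proof -
  have "p \<le> p * r" using r_pos by simp
  then show ?thesis using qr p3 by linarith
qed
lemma n_q2: "int n dvd (int q)^2"
proof -
  have "(int q)^2 = int n * int r" using nq qr by (simp add: power2_eq_square)
  then show ?thesis by simp
qed
lemma q_odd: "odd q" using op q_def by simp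
lemma n_odd: "odd n" using op n_def by simp

definition S where "S = {s. s < n \<and> (int q dvd (int s - 1) \<or> int q dvd (int s + 1))}"

lemma G_sub: "cyc_subgroup n (q - 1) \<subseteq> S"
proof
  fix s assume "s \<in> cyc_subgroup n (q - 1)"
  then obtain i where si: "s = (q - 1)^i mod n" unfolding cyc_subgroup_def by auto
  have npos: "n > 0" using nq p3 q3 by simp
  have "s < n" using si npos by simp
  have si2: "int s = (int q - 1)^i mod int n" using si q3 by (simp add: of_nat_mod of_nat_diff)
  have "int n dvd int s - (int q - 1)^i" unfolding si2 by (subst mod_eq_dvd_iff[symmetric]) simp
  moreover have "int q dvd int n" using nq by simp
  ultimately have d1: "int q dvd int s - (int q - 1)^i" using dvd_trans by blast
  have d2: "int q dvd (int q - 1)^i - (-1)^i"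
  proof -
    have "[int q - 1 = -1] (mod int q)" by (simp add: cong_iff_dvd_diff)
    then have "[(int q - 1)^i = (-1)^i] (mod int q)" by (rule cong_pow)
    then show ?thesis by (simp add: cong_iff_dvd_diff)
  qed
  have d3: "int q dvd int s - (-1)^i" using dvd_add[OF d1 d2] by simp
  have "(-1::int)^i = 1 \<or> (-1::int)^i = -1" by (cases "even i") simp_all
  then have "int q dvd int s - 1 \<or> int q dvd int s + 1" using d3 by (elim disjE) simp_all
  then show "s \<in> S" unfolding S_def using \<open>s < n\<close> by simp
qed

lemma npos: "n > 0" using nq p3 q3 by simp

lemma from_int_mod:
  assumes "int n dvd X - int s" "s < n" and that: "X = (int q - 1)^e"
  shows "s = (q - 1)^e mod n"
proof -
  have "X mod int n = int s mod int n" by (subst mod_eq_dvd_iff) (rule assms(1))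
  also have "\<dots> = int s" using assms(2) by simp
  finally have "int ((q - 1)^e mod n) = int s" unfolding that using q3 by (simp add: of_nat_mod of_nat_diff)
  then show ?thesis by simp
qed

lemma S_sub: "S \<subseteq> cyc_subgroup n (q - 1)"
proof
  fix s assume sS: "s \<in> S"
  define Q where "Q = int q"
  define N where "N = int n"
  define P where "P = int p"
  define R where "R = int r"
  have NPQ: "N = P*Q" unfolding N_def P_def Q_def using nq by simp
  have QQ: "Q^2 = N*R" unfolding N_def R_def Q_def using nq qr by (simp add: power2_eq_square)
  have Q3: "Q \<ge> 3" unfolding Q_def using q3 by simp
  have sn: "s < n" using sS S_def by simp
  define c where "c = Q - 2"
  have sq: "(Q - 1)^2 = 1 + c*Q" unfolding c_def by (simp add: algebra_simps power2_eq_square)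
  have Pm: "odd p" using op .
  have key: "N dvd (Q - 1)^(2*i) - (1 + int i*c*Q)" for i
  proof -
    have "(Q - 1)^(2*i) = (1 + c*Q)^i" by (simp add: power_mult sq)
    moreover have "N dvd Q^2" using QQ by simp
    ultimately show ?thesis using pow_lin_cong[of N Q c i] by simp
  qed
  show "s \<in> cyc_subgroup n (q - 1)"
  proof (cases "int q dvd (int s - 1)")
    case True
    then obtain j where j: "int s - 1 = Q * j" unfolding Q_def by (auto simp: dvd_def)
    have j0: "j \<ge> 0"
    proof (rule ccontr)
      assume "\<not> j \<ge> 0" then have "Q*j \<le> Q * (-1)" using Q3 by (intro mult_left_mono) auto
      then show False using j Q3 by simp
    qed
    have evp: "even (nat j * (p - 1))" using Pm by simp
    define i where "i = nat j * (p - 1) div 2"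
    have "2 * i = nat j * (p - 1)" unfolding i_def using evp by simp
    then have "int (2 * i) = int (nat j) * int (p - 1)" by (metis of_nat_mult)
    then have I2: "2 * int i = j * (P - 1)" unfolding P_def using j0 p3 by (simp add: of_nat_diff)
    have e1: "(1 + int i*c*Q) - int s = int i * Q^2 - 2*int i*Q - Q*j"
      using j unfolding c_def by (simp add: algebra_simps power2_eq_square)
    have "2*int i*Q = (j*(P - 1))*Q" using I2 by simp
    also have "\<dots> = j*N - j*Q" using NPQ by (simp add: algebra_simps)
    finally have h2: "2*int i*Q = j*N - j*Q" .
    have "(1 + int i*c*Q) - int s = N * (int i * R - j)" unfolding e1 h2 QQ by (simp add: algebra_simps)
    then have "N dvd (1 + int i*c*Q) - int s" by simp
    from dvd_add[OF key[of i] this] have "N dvd (Q - 1)^(2*i) - int s" by simp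
    then have "s = (q - 1)^(2*i) mod n" using from_int_mod[of "(Q - 1)^(2*i)" s "2*i"] sn unfolding N_def Q_def by simp
    then have "\<exists>e. s = (q - 1)^e mod n" by (rule exI)
    then show ?thesis by (simp add: cyc_subgroup_def)
  next
    case False
    then have "int q dvd (int s + 1)" using sS S_def by simp
    then obtain j where j: "int s + 1 = Q * j" unfolding Q_def by (auto simp: dvd_def)
    have j1: "j \<ge> 1"
    proof (rule ccontr)
      assume "\<not> j \<ge> 1" then have "Q*j \<le> Q * 0" using Q3 by (intro mult_left_mono) auto
      then show False using j Q3 by simp
    qed
    have evp: "even (nat (j - 1) * (p + 1))" using Pm by simp
    define i where "i = nat (j - 1) * (p + 1) div 2"
    have "2 * i = nat (j - 1) * (p + 1)" unfolding i_def using evp by simp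
    then have "int (2 * i) = int (nat (j - 1)) * int (p + 1)" by (metis of_nat_mult)
    then have I2: "2 * int i = (j - 1) * (P + 1)" unfolding P_def using j1 by (simp add: algebra_simps)
    have e1: "(1 + int i*c*Q)*(Q - 1) - int s = int i * Q * Q^2 - 3 * int i * Q^2 + 2 * int i * Q + Q - j * Q"
      using j unfolding c_def by (simp add: algebra_simps power2_eq_square power3_eq_cube)
    have "2*int i*Q = ((j - 1)*(P + 1))*Q" using I2 by simp
    also have "\<dots> = (j - 1)*N + (j - 1)*Q" using NPQ by (simp add: algebra_simps)
    finally have h2: "2*int i*Q = (j - 1)*N + (j - 1)*Q" .
    have "(1 + int i*c*Q)*(Q - 1) - int s = N * (int i * Q * R - 3 * int i * R + (j - 1))"
      unfolding e1 h2 QQ by (simp add: algebra_simps)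
    then have d1: "N dvd (1 + int i*c*Q)*(Q - 1) - int s" by simp
    have d2: "N dvd ((Q - 1)^(2*i) - (1 + int i*c*Q)) * (Q - 1)" using key[of i] by simp
    have E: "(Q - 1)^(2*i+1) - int s = ((Q - 1)^(2*i) - (1 + int i*c*Q)) * (Q - 1) + ((1 + int i*c*Q)*(Q - 1) - int s)"
      by (simp add: algebra_simps)
    have "N dvd (Q - 1)^(2*i+1) - int s" unfolding E by (rule dvd_add[OF d2 d1])
    then have "s = (q - 1)^(2*i+1) mod n" using from_int_mod[of "(Q - 1)^(2*i+1)" s "2*i+1"] sn unfolding N_def Q_def by simp
    then have "\<exists>e. s = (q - 1)^e mod n" by (rule exI)
    then show ?thesis by (simp add: cyc_subgroup_def)
  qed
qed

lemma G_eq: "cyc_subgroup n (q - 1) = S" using G_sub S_sub by blast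

lemma ppi: "prime (int p)" using pp by simp
lemma p_div2: "int p dvd 2 * X \<Longrightarrow> int p dvd X"
proof -
  assume a: "int p dvd 2 * X"
  have "\<not> int p dvd 2"
  proof
    assume "int p dvd 2" then have "int p \<le> 2" by (rule zdvd_imp_le) simp
    then show False using p3 by simp
  qed
  then show ?thesis using a prime_dvd_mult_iff[OF ppi] by blast
qed
lemma pq: "int p dvd int q" using qr by simp
lemma qn: "int q dvd int n" using nq by simp
lemma pn: "int p dvd int n" using nq by simp
lemma p_dvd_trans: "int q dvd X \<Longrightarrow> int p dvd X" by (rule dvd_trans[OF pq])
lemma p_dvd_trans2: "int n dvd X \<Longrightarrow> int p dvd X" by (rule dvd_trans[OF pn])
lemma q_dvd_trans: "int n dvd X \<Longrightarrow> int q dvd X" by (rule dvd_trans[OF qn])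
lemma p_not_1: "\<not> int p dvd 1" using p3 by simp

lemma eq_from_dvd: "y < n \<Longrightarrow> int n dvd int z - int y \<Longrightarrow> z mod n = y"
proof -
  assume a: "y < n" "int n dvd int z - int y"
  have "int z mod int n = int y mod int n" by (subst mod_eq_dvd_iff) (rule a(2))
  also have "\<dots> = int y" using a(1) by simp
  finally have "int (z mod n) = int y" by (simp add: of_nat_mod)
  then show ?thesis by simp
qed

definition Rel where "Rel x y \<longleftrightarrow> y < n \<and>
  ((\<not> p dvd x \<and> \<not> p dvd y \<and> (int q dvd int y - int x \<or> int q dvd int x + int y))
   \<or> (p dvd x \<and> (y = x \<or> int n dvd int x + int y)))"

lemma coset_sub: "x < n \<Longrightarrow> coset_of n S x \<subseteq> {y. Rel x y}"
proof
  fix y assume xn: "x < n" and "y \<in> coset_of n S x"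
  then obtain s where sS: "s \<in> S" and ys: "y = (x * s) mod n" unfolding coset_of_def by auto
  have yn: "y < n" using ys npos by simp
  have d0: "int n dvd int y - int x * int s"
  proof -
    have "int y = (int x * int s) mod int n" using ys by (simp add: of_nat_mod)
    then show ?thesis by (simp add: mod_eq_dvd_iff[symmetric])
  qed
  have sc: "int q dvd int s - 1 \<or> int q dvd int s + 1" using sS S_def by simp
  show "y \<in> {y. Rel x y}"
  proof (cases "p dvd x")
    case False
    have py: "\<not> p dvd y"
    proof
      assume "p dvd y"
      then have "int p dvd int y" by simp
      moreover have "int p dvd int y - int x * int s" using d0 by (rule p_dvd_trans2)
      ultimately have "int p dvd int y - (int y - int x * int s)" by (rule dvd_diff)
      then have "int p dvd int x * int s" by simp
      then have ps: "int p dvd int s" using False prime_dvd_mult_iff[OF ppi] by simp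
      have "int p dvd int s - 1 \<or> int p dvd int s + 1" using sc p_dvd_trans by auto
      then have "int p dvd 1"
      proof
        assume "int p dvd int s - 1" then show ?thesis using ps dvd_diff[of "int p" "int s" "int s - 1"] by simp
      next
        assume "int p dvd int s + 1" then show ?thesis using ps dvd_diff[of "int p" "int s + 1" "int s"] by simp
      qed
      then show False using p_not_1 by simp
    qed
    have d0q: "int q dvd int y - int x * int s" using d0 by (rule q_dvd_trans)
    have "int q dvd int y - int x \<or> int q dvd int x + int y"
    proof (cases "int q dvd int s - 1")
      case True
      have "int y - int x = (int y - int x * int s) + int x * (int s - 1)" by (simp add: algebra_simps)
      then have "int q dvd int y - int x" by (rule dv2[OF _ d0q True])
      then show ?thesis by simp
    next
      case False
      then have T: "int q dvd int s + 1" using sc by simp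
      have "int x + int y = (int y - int x * int s) + int x * (int s + 1)" by (simp add: algebra_simps)
      then have "int q dvd int x + int y" by (rule dv2[OF _ d0q T])
      then show ?thesis by simp
    qed
    then show ?thesis using False py yn unfolding Rel_def by simp
  next
    case True
    then obtain x' where x': "x = p * x'" by (auto simp: dvd_def)
    have "y = x \<or> int n dvd int x + int y"
    proof (cases "int q dvd int s - 1")
      case T: True
      have "int n dvd int x * (int s - 1)" using T x' nq by (simp add: mult_dvd_mono mult.assoc)
      moreover have "int y - int x = (int y - int x * int s) + int x * (int s - 1)" by (simp add: algebra_simps)
      ultimately have "int n dvd int y - int x" using d0 dvs by metis
      then have "int n dvd int x - int y" by (simp add: dvd_diff_commute)
      then have "x mod n = y" by (rule eq_from_dvd[OF yn])
      then show ?thesis using xn by simp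
    next
      case False
      then have T: "int q dvd int s + 1" using sc by simp
      have "int n dvd int x * (int s + 1)" using T x' nq by (simp add: mult_dvd_mono mult.assoc)
      moreover have "int x + int y = (int y - int x * int s) + int x * (int s + 1)" by (simp add: algebra_simps)
      ultimately have "int n dvd int x + int y" using d0 dvs by metis
      then show ?thesis by simp
    qed
    then show ?thesis using True yn unfolding Rel_def by simp
  qed
qed

lemma n_gt1: "n > 1"
proof -
  have "p \<le> p*q" using q3 by simp
  then show ?thesis using nq p3 by linarith
qed
lemma one_S: "1 \<in> S" using n_gt1 unfolding S_def by simp
lemma nm1_S: "n - 1 \<in> S" using npos qn unfolding S_def by (simp add: of_nat_diff)

lemma coset_sup: "x < n \<Longrightarrow> {y. Rel x y} \<subseteq> coset_of n S x"
proof
  fix y assume xn: "x < n" and "y \<in> {y. Rel x y}"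
  then have R: "Rel x y" by simp
  have yn: "y < n" using R Rel_def by simp
  have "\<exists>s\<in>S. y = (x * s) mod n"
  proof (cases "p dvd x")
    case False
    have "\<not> int p dvd int x" using False by simp
    then have "coprime (int p) (int x)" by (rule prime_imp_coprime[OF ppi])
    then have "coprime (int x) (int p ^ k)" by (simp add: coprime_commute)
    then have "coprime (int x) (int n)" unfolding n_def by simp
    then obtain u where u: "[int x * u = 1] (mod int n)" using cong_solve_coprime_int by blast
    then have du: "int n dvd int x * u - 1" by (simp add: cong_iff_dvd_diff)
    define s where "s = nat ((u * int y) mod int n)"
    have si: "int s = (u * int y) mod int n" unfolding s_def using npos by simp
    have sn: "s < n" proof -
      have "(u * int y) mod int n < int n" using npos by simp
      then show ?thesis using si by linarith
    qed
    have ds: "int n dvd int s - u * int y" unfolding si by (simp add: mod_eq_dvd_iff[symmetric])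
    have "int x * int s - int y = int x * (int s - u * int y) + (int x * u - 1) * int y" by (simp add: algebra_simps)
    then have "int n dvd int (x * s) - int y" using ds du by (simp add: dvd_add)
    then have ys: "y = (x * s) mod n" using eq_from_dvd[OF yn] by simp
    have dsq: "int q dvd int s - u * int y" using ds by (rule q_dvd_trans)
    have duq: "int q dvd int x * u - 1" using du by (rule q_dvd_trans)
    have Rq: "int q dvd int y - int x \<or> int q dvd int x + int y" using R False unfolding Rel_def by simp
    have "int q dvd int s - 1 \<or> int q dvd int s + 1"
    proof (cases "int q dvd int y - int x")
      case True
      have "int s - 1 = (int s - u * int y) + u * (int y - int x) + (int x * u - 1)" by (simp add: algebra_simps)
      then have "int q dvd int s - 1" by (rule dv3[OF _ dsq True duq])
      then show ?thesis by simp
    next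
      case F: False
      then have T: "int q dvd int x + int y" using Rq by simp
      have "int s + 1 = (int s - u * int y) + u * (int x + int y) - (int x * u - 1)" by (simp add: algebra_simps)
      then have "int q dvd int s + 1" by (rule dv3m[OF _ dsq T duq])
      then show ?thesis by simp
    qed
    then have "s \<in> S" using sn S_def by simp
    then show ?thesis using ys by blast
  next
    case True
    then have c: "y = x \<or> int n dvd int x + int y" using R Rel_def by simp
    show ?thesis
    proof (cases "y = x")
      case True then show ?thesis using one_S xn by force
    next
      case False
      then have d: "int n dvd int x + int y" using c by simp
      have "int (x * (n - 1)) - int y = int x * int n - (int x + int y)" using npos by (simp add: of_nat_diff algebra_simps)
      then have "int n dvd int (x * (n - 1)) - int y" by (rule dvm[OF _ dvd_triv_right d])
      then have "y = (x * (n - 1)) mod n" using eq_from_dvd[OF yn] by simp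
      then show ?thesis using nm1_S by blast
    qed
  qed
  then show "y \<in> coset_of n S x" unfolding coset_of_def by blast
qed

lemma coset_eq: "x < n \<Longrightarrow> coset_of n (cyc_subgroup n (q - 1)) x = {y. Rel x y}"
  unfolding G_eq using coset_sub coset_sup by (rule subset_antisym)

end


lemma card_res:
  fixes d m :: nat and c :: int
  assumes d0: "0 < d"
  shows "card {y::nat. y < m*d \<and> int d dvd int y - c} = m"
proof -
  define c0 where "c0 = nat (c mod int d)"
  have c0i: "int c0 = c mod int d" unfolding c0_def using d0 by simp
  have c0d: "c0 < d" using c0i d0
    by (metis of_nat_0_less_iff of_nat_less_iff pos_mod_bound)
  have eq: "{y::nat. y < m*d \<and> int d dvd int y - c} = (\<lambda>j. c0 + j*d) ` {0..<m}"
  proof (rule set_eqI, rule iffI)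
    fix y assume "y \<in> {y::nat. y < m*d \<and> int d dvd int y - c}"
    then have ym: "y < m*d" and dy: "int d dvd int y - c" by auto
    have "int y mod int d = c mod int d" using dy by (simp add: mod_eq_dvd_iff)
    then have "int (y mod d) = int c0" using c0i by (simp add: of_nat_mod)
    then have ym0: "y mod d = c0" by simp
    have "y = y mod d + (y div d) * d" by simp
    then have ye: "y = c0 + (y div d) * d" using ym0 by simp
    have "y div d < m" using ym d0 by (simp add: less_mult_imp_div_less)
    then show "y \<in> (\<lambda>j. c0 + j*d) ` {0..<m}" using ye by auto
  next
    fix y assume "y \<in> (\<lambda>j. c0 + j*d) ` {0..<m}"
    then obtain j where j: "j < m" and ye: "y = c0 + j*d" by auto
    have "Suc j * d \<le> m * d" using j by (intro mult_le_mono1) simp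
    then have "y < m*d" using ye c0d by simp
    moreover have "int d dvd int y - c"
    proof -
      have e: "int y - c = (c mod int d - c) + int j * int d" using ye c0i by simp
      have "int d dvd c mod int d - c" by (simp add: mod_eq_dvd_iff[symmetric])
      then show ?thesis unfolding e by (simp add: dvd_add)
    qed
    ultimately show "y \<in> {y::nat. y < m*d \<and> int d dvd int y - c}" by simp
  qed
  have "inj_on (\<lambda>j. c0 + j*d) {0..<m}" using d0 by (intro inj_onI) simp
  then show ?thesis unfolding eq by (simp add: card_image)
qed

lemma half_dvd:
  fixes d :: nat and X A :: int
  assumes od: "odd d"
  shows "int d dvd 2*X + A \<longleftrightarrow> int d dvd X - (- A * ((int d + 1) div 2))"
proof -
  define h where "h = (int d + 1) div 2"
  obtain t where t: "d = 2*t + 1" using od by (elim oddE)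
  have h2: "2 * h = int d + 1" unfolding h_def t by simp
  have e: "2 * (X - (- A * h)) = (2*X + A) + A * int d" using h2 by (simp add: algebra_simps)
  have cp: "coprime (int d) 2" using od by simp
  have "int d dvd 2*X + A \<longleftrightarrow> int d dvd 2 * (X - (- A * h))"
    unfolding e by (simp add: dvd_add_left_iff)
  also have "\<dots> \<longleftrightarrow> int d dvd X - (- A * h)" by (rule coprime_dvd_mult_right_iff[OF cp])
  finally show ?thesis unfolding h_def .
qed



context zd begin

lemma Rel_lt: "Rel x y \<Longrightarrow> y < n" unfolding Rel_def by simp
lemma Rel_unit: "Rel x y \<Longrightarrow> \<not> p dvd x \<Longrightarrow> \<not> p dvd y" unfolding Rel_def by auto
lemma Rel_nonunit: "Rel x y \<Longrightarrow> p dvd x \<Longrightarrow> p dvd y"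
proof -
  assume R: "Rel x y" and px: "p dvd x"
  then have c: "y = x \<or> int n dvd int x + int y" unfolding Rel_def by auto
  show "p dvd y"
  proof (cases "y = x")
    case True then show ?thesis using px by simp
  next
    case False
    then have "int p dvd int x + int y" using c p_dvd_trans2 by auto
    moreover have "int p dvd int x" using px by simp
    ultimately have "int p dvd (int x + int y) - int x" by (rule dvd_diff)
    then show ?thesis by simp
  qed
qed

lemma Rel_refl: "x < n \<Longrightarrow> Rel x x" unfolding Rel_def by simp

lemma Rel_sym: "x < n \<Longrightarrow> Rel x y \<Longrightarrow> Rel y x"
proof -
  assume xn: "x < n" and R: "Rel x y"
  show "Rel y x"
  proof (cases "p dvd x")
    case False
    then have py: "\<not> p dvd y" using Rel_unit R by blast
    have "int q dvd int y - int x \<or> int q dvd int x + int y" using R False unfolding Rel_def by simp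
    then have "int q dvd int x - int y \<or> int q dvd int y + int x" by (simp add: dvd_diff_commute add.commute)
    then show ?thesis using xn False py unfolding Rel_def by simp
  next
    case True
    then have py: "p dvd y" using Rel_nonunit R by blast
    have "y = x \<or> int n dvd int x + int y" using R True unfolding Rel_def by simp
    then have "x = y \<or> int n dvd int y + int x" by (auto simp: add.commute)
    then show ?thesis using xn py unfolding Rel_def by simp
  qed
qed

lemma Rel_trans: "x < n \<Longrightarrow> Rel x y \<Longrightarrow> Rel y z \<Longrightarrow> Rel x z"
proof -
  assume xn: "x < n" and R1: "Rel x y" and R2: "Rel y z"
  have zn: "z < n" using R2 Rel_lt by blast
  show "Rel x z"
  proof (cases "p dvd x")
    case False
    then have py: "\<not> p dvd y" using Rel_unit R1 by blast
    then have pz: "\<not> p dvd z" using Rel_unit R2 by blast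
    have c1: "int q dvd int y - int x \<or> int q dvd int x + int y" using R1 False unfolding Rel_def by simp
    have c2: "int q dvd int z - int y \<or> int q dvd int y + int z" using R2 py unfolding Rel_def by simp
    have "int q dvd int z - int x \<or> int q dvd int x + int z"
    proof (cases "int q dvd int y - int x")
      case T1: True
      show ?thesis
      proof (cases "int q dvd int z - int y")
        case True
        have "int z - int x = (int z - int y) + (int y - int x)" by simp
        then have "int q dvd int z - int x" using dvs True T1 by metis
        then show ?thesis by simp
      next
        case False
        then have T: "int q dvd int y + int z" using c2 by simp
        have "int x + int z = (int y + int z) - (int y - int x)" by simp
        then have "int q dvd int x + int z" using dvm T T1 by metis
        then show ?thesis by simp
      qed
    next
      case F1: False
      then have T1: "int q dvd int x + int y" using c1 by simp
      show ?thesis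
      proof (cases "int q dvd int z - int y")
        case True
        have "int x + int z = (int x + int y) + (int z - int y)" by simp
        then have "int q dvd int x + int z" using dvs True T1 by metis
        then show ?thesis by simp
      next
        case False
        then have T: "int q dvd int y + int z" using c2 by simp
        have "int z - int x = (int y + int z) - (int x + int y)" by simp
        then have "int q dvd int z - int x" using dvm T T1 by metis
        then show ?thesis by simp
      qed
    qed
    then show ?thesis using zn False pz unfolding Rel_def by simp
  next
    case True
    then have py: "p dvd y" using Rel_nonunit R1 by blast
    have c1: "y = x \<or> int n dvd int x + int y" using R1 True unfolding Rel_def by simp
    have c2: "z = y \<or> int n dvd int y + int z" using R2 py unfolding Rel_def by simp
    have "z = x \<or> int n dvd int x + int z"
    proof (cases "y = x")
      case True then show ?thesis using c2 by auto
    next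
      case False
      then have T1: "int n dvd int x + int y" using c1 by simp
      show ?thesis
      proof (cases "z = y")
        case True then show ?thesis using T1 by simp
      next
        case False
        then have T: "int n dvd int y + int z" using c2 by simp
        have "int z - int x = (int y + int z) - (int x + int y)" by simp
        then have "int n dvd int z - int x" using dvm T T1 by metis
        then have "z mod n = x" using eq_from_dvd[OF xn] by simp
        then show ?thesis using zn by simp
      qed
    qed
    then show ?thesis using zn True unfolding Rel_def by simp
  qed
qed

definition cls where "cls x = {y. Rel x y}"

lemma cls_eq_iff: "x < n \<Longrightarrow> y < n \<Longrightarrow> cls x = cls y \<longleftrightarrow> Rel x y"
proof
  assume xn: "x < n" and yn: "y < n" and e: "cls x = cls y"
  have "y \<in> cls y" using Rel_refl[OF yn] unfolding cls_def by simp
  then have "y \<in> cls x" using e by simp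
  then show "Rel x y" unfolding cls_def by simp
next
  assume xn: "x < n" and yn: "y < n" and R: "Rel x y"
  have Ry: "Rel y x" using Rel_sym[OF xn R] .
  show "cls x = cls y"
  proof (rule set_eqI)
    fix z
    show "z \<in> cls x \<longleftrightarrow> z \<in> cls y" unfolding cls_def using Rel_trans[OF xn R] Rel_trans[OF yn Ry] by blast
  qed
qed

lemma cls_disj: "x < n \<Longrightarrow> y < n \<Longrightarrow> cls x \<noteq> cls y \<Longrightarrow> cls x \<inter> cls y = {}"
proof (rule ccontr)
  assume xn: "x < n" and yn: "y < n" and ne: "cls x \<noteq> cls y" and "cls x \<inter> cls y \<noteq> {}"
  then obtain z where "Rel x z" "Rel y z" unfolding cls_def by auto
  then have "Rel x y" using Rel_trans[OF xn] Rel_sym[OF yn] by blast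
  then show False using ne cls_eq_iff[OF xn yn] by simp
qed

lemma Rel_zero: "Rel 0 y \<Longrightarrow> y = 0"
proof -
  assume R: "Rel 0 y"
  then have yn: "y < n" using Rel_lt by blast
  have "y = 0 \<or> int n dvd int y" using R unfolding Rel_def by simp
  then show "y = 0" using yn by (auto dest: zdvd_imp_le)
qed

lemma x_in_cls: "x < n \<Longrightarrow> x \<in> cls x" unfolding cls_def using Rel_refl by simp

end


context zd begin

lemma cls_nonunit: "0 < x \<Longrightarrow> x < n \<Longrightarrow> p dvd x \<Longrightarrow> cls x = {x, n - x}"
proof -
  assume x0: "0 < x" and xn: "x < n" and px: "p dvd x"
  show "cls x = {x, n - x}"
  proof (rule set_eqI, rule iffI)
    fix y assume "y \<in> cls x"
    then have R: "Rel x y" unfolding cls_def by simp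
    then have yn: "y < n" using Rel_lt by blast
    have c: "y = x \<or> int n dvd int x + int y" using R px unfolding Rel_def by simp
    show "y \<in> {x, n - x}"
    proof (cases "y = x")
      case True then show ?thesis by simp
    next
      case False
      then have "int n dvd int (x + y)" using c by simp
      then have "n dvd x + y" by (simp only: of_nat_dvd_iff)
      then obtain t where t: "x + y = n * t" by (auto simp: dvd_def)
      have "t \<noteq> 0"
      proof
        assume "t = 0" then show False using t x0 by simp
      qed
      moreover have "t < 2"
      proof (rule ccontr)
        assume "\<not> t < 2" then have "n * 2 \<le> n * t" by simp
        then show False using t xn yn by linarith
      qed
      ultimately have "t = 1" by simp
      then have "y = n - x" using t by simp
      then show ?thesis by simp
    qed
  next
    fix y assume "y \<in> {x, n - x}"
    then have "y = x \<or> y = n - x" by simp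
    then show "y \<in> cls x"
    proof
      assume "y = x" then show ?thesis using x_in_cls[OF xn] by simp
    next
      assume y: "y = n - x"
      have "int x + int y = int n" using y xn by simp
      then have "int n dvd int x + int y" by simp
      then show ?thesis unfolding cls_def Rel_def using y x0 xn px by simp
    qed
  qed
qed

lemma card_cls_nonunit: "0 < x \<Longrightarrow> x < n \<Longrightarrow> p dvd x \<Longrightarrow> card (cls x) = 2"
proof -
  assume a: "0 < x" "x < n" "p dvd x"
  have "x \<noteq> n - x"
  proof
    assume "x = n - x" then have "n = 2 * x" using a by simp
    then show False using n_odd by simp
  qed
  then show ?thesis using cls_nonunit[OF a] by simp
qed

lemma cls_unit: "x < n \<Longrightarrow> \<not> p dvd x \<Longrightarrow>
  cls x = {y. y < p*q \<and> int q dvd int y - int x} \<union> {y. y < p*q \<and> int q dvd int y - (- int x)}"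
proof -
  assume xn: "x < n" and px: "\<not> p dvd x"
  show ?thesis
  proof (rule set_eqI, rule iffI)
    fix y assume "y \<in> cls x"
    then have "Rel x y" unfolding cls_def by simp
    then have "y < n \<and> (int q dvd int y - int x \<or> int q dvd int x + int y)" using px unfolding Rel_def by simp
    then show "y \<in> {y. y < p*q \<and> int q dvd int y - int x} \<union> {y. y < p*q \<and> int q dvd int y - (- int x)}"
      using nq by (auto simp: add.commute)
  next
    fix y assume "y \<in> {y. y < p*q \<and> int q dvd int y - int x} \<union> {y. y < p*q \<and> int q dvd int y - (- int x)}"
    then have yn: "y < n" and c: "int q dvd int y - int x \<or> int q dvd int x + int y" using nq by (auto simp: add.commute)
    have py: "\<not> p dvd y"
    proof
      assume "p dvd y" then have py: "int p dvd int y" by simp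
      have "int p dvd int y - int x \<or> int p dvd int x + int y" using c p_dvd_trans by blast
      then have "int p dvd int y - (int y - int x) \<or> int p dvd (int x + int y) - int y"
        using py dvd_diff by blast
      then have "int p dvd int x" by auto
      then show False using px by simp
    qed
    show "y \<in> cls x" unfolding cls_def Rel_def using yn py px c by simp
  qed
qed

lemma card_cls_unit: "x < n \<Longrightarrow> \<not> p dvd x \<Longrightarrow> card (cls x) = 2 * p"
proof -
  assume xn: "x < n" and px: "\<not> p dvd x"
  have qpos: "0 < q" using q3 by simp
  have disj: "{y. y < p*q \<and> int q dvd int y - int x} \<inter> {y. y < p*q \<and> int q dvd int y - (- int x)} = {}"
  proof (rule ccontr)
    assume "{y. y < p*q \<and> int q dvd int y - int x} \<inter> {y. y < p*q \<and> int q dvd int y - (- int x)} \<noteq> {}"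
    then obtain y where d1: "int q dvd int y - int x" and d2: "int q dvd int y - (- int x)" by auto
    have "int q dvd (int y - (- int x)) - (int y - int x)" using d1 d2 by (rule dvd_diff[rotated])
    then have "int q dvd 2 * int x" by simp
    then have "int p dvd 2 * int x" by (rule p_dvd_trans)
    then have "int p dvd int x" by (rule p_div2)
    then show False using px by simp
  qed
  have f1: "finite {y. y < p*q \<and> int q dvd int y - int x}" by simp
  have f2: "finite {y. y < p*q \<and> int q dvd int y - (- int x)}" by simp
  show ?thesis unfolding cls_unit[OF xn px] using card_Un_disjoint[OF f1 f2 disj]
    card_res[OF qpos, of p "int x"] card_res[OF qpos, of p "- int x"] by simp
qed

definition A1 where "A1 = {x. 0 < x \<and> x < n \<and> p dvd x}"
definition A2 where "A2 = {x. x < n \<and> \<not> p dvd x}"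

lemma mult_p_set: "{x. x < n \<and> p dvd x} = (\<lambda>j. p * j) ` {0..<q}"
proof (rule set_eqI, rule iffI)
  fix x assume "x \<in> {x. x < n \<and> p dvd x}"
  then obtain j where xj: "x = p * j" and "p * j < p * q" using nq by (auto simp: dvd_def)
  then have "j < q" by simp
  then show "x \<in> (\<lambda>j. p * j) ` {0..<q}" using xj by auto
next
  fix x assume "x \<in> (\<lambda>j. p * j) ` {0..<q}"
  then obtain j where xj: "x = p * j" and "j \<in> {0..<q}" by (rule imageE)
  then have "p * j < p * q" using p3 by simp
  then show "x \<in> {x. x < n \<and> p dvd x}" using nq xj by simp
qed

lemma card_mult_p: "card {x. x < n \<and> p dvd x} = q"
proof -
  have "inj_on (\<lambda>j. p * j) {0..<q}" using p3 by (intro inj_onI) simp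
  then show ?thesis unfolding mult_p_set by (simp add: card_image)
qed

lemma card_A2: "card A2 = n - q"
proof -
  have "A2 = {0..<n} - {x. x < n \<and> p dvd x}" unfolding A2_def by auto
  moreover have "{x. x < n \<and> p dvd x} \<subseteq> {0..<n}" by auto
  ultimately show ?thesis using card_mult_p by (simp add: card_Diff_subset)
qed

lemma card_A1: "card A1 = q - 1"
proof -
  have "A1 = {x. x < n \<and> p dvd x} - {0}" unfolding A1_def by auto
  moreover have "0 \<in> {x. x < n \<and> p dvd x}" using npos by simp
  ultimately show ?thesis using card_mult_p by (simp add: card_Diff_singleton)
qed

lemma A1_cover: "\<Union> (cls ` A1) = A1"
proof
  show "\<Union> (cls ` A1) \<subseteq> A1"
  proof (rule subsetI)
    fix z assume "z \<in> \<Union> (cls ` A1)"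
    then obtain x where x: "x \<in> A1" "z \<in> cls x" by auto
    then have z: "z = x \<or> z = n - x" using cls_nonunit unfolding A1_def by auto
    have "p dvd n - x" using x(1) nq unfolding A1_def by (auto intro: dvd_diff_nat)
    then show "z \<in> A1" using z x(1) unfolding A1_def by auto
  qed
next
  show "A1 \<subseteq> \<Union> (cls ` A1)" using x_in_cls unfolding A1_def by blast
qed

lemma A2_cover: "\<Union> (cls ` A2) = A2"
proof
  show "\<Union> (cls ` A2) \<subseteq> A2"
  proof (rule subsetI)
    fix z assume "z \<in> \<Union> (cls ` A2)"
    then obtain x where x: "x \<in> A2" "z \<in> cls x" by auto
    then have "Rel x z" unfolding cls_def by simp
    then show "z \<in> A2" using x(1) Rel_unit Rel_lt unfolding A2_def by blast
  qed
next
  show "A2 \<subseteq> \<Union> (cls ` A2)" using x_in_cls unfolding A2_def by blast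
qed

lemma card_C1: "2 * card (cls ` A1) = q - 1"
proof -
  have "2 * card (cls ` A1) = card (\<Union> (cls ` A1))"
  proof (rule card_partition)
    show "finite (cls ` A1)" unfolding A1_def by simp
    show "finite (\<Union> (cls ` A1))" unfolding A1_cover unfolding A1_def by simp
    show "\<And>c. c \<in> cls ` A1 \<Longrightarrow> card c = 2" using card_cls_nonunit unfolding A1_def by auto
    show "\<And>c1 c2. c1 \<in> cls ` A1 \<Longrightarrow> c2 \<in> cls ` A1 \<Longrightarrow> c1 \<noteq> c2 \<Longrightarrow> c1 \<inter> c2 = {}" using cls_disj unfolding A1_def by auto
  qed
  then show ?thesis using A1_cover card_A1 by simp
qed

lemma card_C2: "2 * card (cls ` A2) = q - r"
proof -
  have "(2 * p) * card (cls ` A2) = card (\<Union> (cls ` A2))"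
  proof (rule card_partition)
    show "finite (cls ` A2)" unfolding A2_def by simp
    show "finite (\<Union> (cls ` A2))" unfolding A2_cover unfolding A2_def by simp
    show "\<And>c. c \<in> cls ` A2 \<Longrightarrow> card c = 2 * p" using card_cls_unit unfolding A2_def by auto
    show "\<And>c1 c2. c1 \<in> cls ` A2 \<Longrightarrow> c2 \<in> cls ` A2 \<Longrightarrow> c1 \<noteq> c2 \<Longrightarrow> c1 \<inter> c2 = {}" using cls_disj unfolding A2_def by auto
  qed
  then have "p * (2 * card (cls ` A2)) = n - q" using A2_cover card_A2 by simp
  also have "n - q = p * (q - r)" using nq qr by (simp add: diff_mult_distrib2)
  finally show ?thesis using p3 by simp
qed

lemma card_C: "card (cls ` {0..<n}) = (2 * q - r + 1) div 2"
proof -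
  have U: "{0..<n} = {0} \<union> A1 \<union> A2" unfolding A1_def A2_def using npos by auto
  have i0: "cls ` {0..<n} = {cls 0} \<union> cls ` A1 \<union> cls ` A2" unfolding U by auto
  have d1: "{cls 0} \<inter> cls ` A1 = {}"
  proof (rule ccontr)
    assume "{cls 0} \<inter> cls ` A1 \<noteq> {}"
    then obtain x where x: "x \<in> A1" "cls 0 = cls x" by auto
    then have "Rel 0 x" using cls_eq_iff npos unfolding A1_def by auto
    then show False using Rel_zero x(1) unfolding A1_def by auto
  qed
  have d2: "({cls 0} \<union> cls ` A1) \<inter> cls ` A2 = {}"
  proof (rule ccontr)
    assume "({cls 0} \<union> cls ` A1) \<inter> cls ` A2 \<noteq> {}"
    then obtain x y where x: "x = 0 \<or> x \<in> A1" and y: "y \<in> A2" and e: "cls x = cls y" by blast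
    have xn: "x < n" using x npos unfolding A1_def by auto
    have px: "p dvd x" using x unfolding A1_def by auto
    have "Rel x y" using e cls_eq_iff xn y unfolding A2_def by auto
    then have "p dvd y" using Rel_nonunit px by blast
    then show False using y unfolding A2_def by simp
  qed
  have fin1: "finite (cls ` A1)" unfolding A1_def by simp
  have fin2: "finite (cls ` A2)" unfolding A2_def by simp
  have "card (cls ` {0..<n}) = card ({cls 0} \<union> cls ` A1) + card (cls ` A2)"
    unfolding i0 by (rule card_Un_disjoint) (use fin1 fin2 d2 in auto)
  also have "card ({cls 0} \<union> cls ` A1) = 1 + card (cls ` A1)" using card_Un_disjoint[of "{cls 0}" "cls ` A1"] fin1 d1 by simp
  finally have e: "card (cls ` {0..<n}) = 1 + card (cls ` A1) + card (cls ` A2)" .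
  have "r < q" using qr r_pos p3 by simp
  then show ?thesis using e card_C1 card_C2 q3 by linarith
qed

end


context zd begin

lemma Rel_shift:
  assumes a0: "0 < a" and an: "a < n" and xn: "x < n"
  shows "Rel x ((x + a) mod n) \<longleftrightarrow>
    (\<not> p dvd x \<and> \<not> int p dvd int x + int a \<and> (int q dvd int a \<or> int q dvd 2 * int x + int a))
    \<or> (p dvd x \<and> int n dvd 2 * int x + int a)"
proof -
  define y where "y = (x + a) mod n"
  have yn: "y < n" unfolding y_def using npos by simp
  have "int y = (int x + int a) mod int n" unfolding y_def by (simp add: of_nat_mod)
  then have dY: "int n dvd int y - (int x + int a)" by (simp add: mod_eq_dvd_iff[symmetric])
  have dYq: "int q dvd int y - (int x + int a)" using dY by (rule q_dvd_trans)
  have dYp: "int p dvd int y - (int x + int a)" using dY by (rule p_dvd_trans2)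
  have F1: "int q dvd int y - int x \<longleftrightarrow> int q dvd int a"
  proof -
    have E: "int y - int x = (int y - (int x + int a)) + int a" by simp
    show ?thesis unfolding E by (rule dvd_add_right_iff[OF dYq])
  qed
  have F2: "int q dvd int x + int y \<longleftrightarrow> int q dvd 2 * int x + int a"
  proof -
    have E: "int x + int y = (int y - (int x + int a)) + (2 * int x + int a)" by simp
    show ?thesis unfolding E by (rule dvd_add_right_iff[OF dYq])
  qed
  have F4: "int n dvd int x + int y \<longleftrightarrow> int n dvd 2 * int x + int a"
  proof -
    have E: "int x + int y = (int y - (int x + int a)) + (2 * int x + int a)" by simp
    show ?thesis unfolding E by (rule dvd_add_right_iff[OF dY])
  qed
  have F5: "p dvd y \<longleftrightarrow> int p dvd int x + int a"
  proof -
    have E: "int y = (int y - (int x + int a)) + (int x + int a)" by simp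
    have "int p dvd int y \<longleftrightarrow> int p dvd int x + int a" by (subst E) (rule dvd_add_right_iff[OF dYp])
    then show ?thesis by simp
  qed
  have F3: "y \<noteq> x"
  proof
    assume "y = x"
    then have "int n dvd - int a" using dY by simp
    then have "n dvd a" by simp
    then have "n \<le> a" using a0 by (rule dvd_imp_le)
    then show False using an by simp
  qed
  show ?thesis unfolding y_def[symmetric] Rel_def using yn F1 F2 F3 F4 F5 by auto
qed

lemma cnt1: assumes "0 < a" "a < n" "\<not> p dvd a"
  shows "card {x. x < n \<and> Rel x ((x + a) mod n)} = p"
proof -
  define c where "c = - int a * ((int q + 1) div 2)"
  have "{x. x < n \<and> Rel x ((x + a) mod n)} = {y. y < p * q \<and> int q dvd int y - c}"
  proof (rule set_eqI)
    fix x
    show "x \<in> {x. x < n \<and> Rel x ((x + a) mod n)} \<longleftrightarrow> x \<in> {y. y < p * q \<and> int q dvd int y - c}"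
    proof (cases "x < n")
      case False then show ?thesis using nq by simp
    next
      case xn: True
      have pa: "\<not> int p dvd int a" using assms by simp
      have qa: "\<not> int q dvd int a" using pa p_dvd_trans by blast
      have "Rel x ((x + a) mod n) \<longleftrightarrow> int q dvd 2 * int x + int a"
      proof
        assume "Rel x ((x + a) mod n)"
        then have "(\<not> p dvd x \<and> \<not> int p dvd int x + int a \<and> (int q dvd int a \<or> int q dvd 2 * int x + int a))
          \<or> (p dvd x \<and> int n dvd 2 * int x + int a)" using Rel_shift[OF assms(1,2) xn] by simp
        then show "int q dvd 2 * int x + int a" using qa q_dvd_trans by blast
      next
        assume d: "int q dvd 2 * int x + int a"
        then have dp: "int p dvd 2 * int x + int a" by (rule p_dvd_trans)
        have px: "\<not> p dvd x"
        proof
          assume "p dvd x" then have "int p dvd 2 * int x" by simp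
          then have "int p dvd (2 * int x + int a) - 2 * int x" by (rule dvd_diff[OF dp])
          then show False using pa by simp
        qed
        have pxa: "\<not> int p dvd int x + int a"
        proof
          assume "int p dvd int x + int a"
          then have "int p dvd (2 * int x + int a) - (int x + int a)" by (rule dvd_diff[OF dp])
          then show False using px by simp
        qed
        show "Rel x ((x + a) mod n)" using Rel_shift[OF assms(1,2) xn] px pxa d by simp
      qed
      also have "\<dots> \<longleftrightarrow> int q dvd int x - c" unfolding c_def by (rule half_dvd[OF q_odd])
      finally show ?thesis using xn nq by simp
    qed
  qed
  then show ?thesis using card_res[of q p c] q3 by simp
qed

lemma n_dvd_2xa: "int n dvd 2 * int x + int a \<Longrightarrow> p dvd a \<Longrightarrow> p dvd x"
proof -
  assume d: "int n dvd 2 * int x + int a" and pa: "p dvd a"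
  have "int p dvd 2 * int x + int a" using d by (rule p_dvd_trans2)
  moreover have "int p dvd int a" using pa by simp
  ultimately have "int p dvd (2 * int x + int a) - int a" by (rule dvd_diff)
  then have "int p dvd 2 * int x" by simp
  then have "int p dvd int x" by (rule p_div2)
  then show ?thesis by simp
qed

lemma card_n_set: "card {x. x < n \<and> int n dvd 2 * int x + int a} = 1"
proof -
  define c where "c = - int a * ((int n + 1) div 2)"
  have "{x. x < n \<and> int n dvd 2 * int x + int a} = {y. y < 1 * n \<and> int n dvd int y - c}"
    unfolding c_def using half_dvd[OF n_odd] by auto
  then show ?thesis using card_res[of n 1 c] npos by simp
qed

lemma cnt2: assumes "0 < a" "a < n" "p dvd a" "\<not> q dvd a"
  shows "card {x. x < n \<and> Rel x ((x + a) mod n)} = 1"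
proof -
  have qa: "\<not> int q dvd int a" using assms by simp
  have "{x. x < n \<and> Rel x ((x + a) mod n)} = {x. x < n \<and> int n dvd 2 * int x + int a}"
  proof (rule set_eqI)
    fix x
    show "x \<in> {x. x < n \<and> Rel x ((x + a) mod n)} \<longleftrightarrow> x \<in> {x. x < n \<and> int n dvd 2 * int x + int a}"
    proof (cases "x < n")
      case False then show ?thesis by simp
    next
      case xn: True
      have "Rel x ((x + a) mod n) \<longleftrightarrow> int n dvd 2 * int x + int a"
      proof
        assume "Rel x ((x + a) mod n)"
        then have c: "(\<not> p dvd x \<and> \<not> int p dvd int x + int a \<and> (int q dvd int a \<or> int q dvd 2 * int x + int a))
          \<or> (p dvd x \<and> int n dvd 2 * int x + int a)" using Rel_shift[OF assms(1,2) xn] by simp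
        show "int n dvd 2 * int x + int a"
        proof (cases "p dvd x")
          case True then show ?thesis using c by simp
        next
          case False
          then have "int q dvd 2 * int x + int a" using c qa by simp
          then have "int p dvd 2 * int x + int a" by (rule p_dvd_trans)
          moreover have "int p dvd int a" using assms by simp
          ultimately have "int p dvd (2 * int x + int a) - int a" by (rule dvd_diff)
          then have "int p dvd 2 * int x" by simp
          then have "int p dvd int x" by (rule p_div2)
          then show ?thesis using False by simp
        qed
      next
        assume d: "int n dvd 2 * int x + int a"
        then have "p dvd x" using n_dvd_2xa assms by blast
        then show "Rel x ((x + a) mod n)" using Rel_shift[OF assms(1,2) xn] d by simp
      qed
      then show ?thesis using xn by simp
    qed
  qed
  then show ?thesis using card_n_set by simp
qed

lemma cnt3: assumes "0 < a" "a < n" "q dvd a"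
  shows "card {x. x < n \<and> Rel x ((x + a) mod n)} = n - q + 1"
proof -
  have qa: "int q dvd int a" using assms by simp
  have "int p dvd int a" using qa by (rule p_dvd_trans)
  then have pa: "p dvd a" by simp
  have "{x. x < n \<and> Rel x ((x + a) mod n)} = A2 \<union> {x. x < n \<and> int n dvd 2 * int x + int a}"
  proof (rule set_eqI)
    fix x
    show "x \<in> {x. x < n \<and> Rel x ((x + a) mod n)} \<longleftrightarrow> x \<in> A2 \<union> {x. x < n \<and> int n dvd 2 * int x + int a}"
    proof (cases "x < n")
      case False then show ?thesis unfolding A2_def by simp
    next
      case xn: True
      have "Rel x ((x + a) mod n) \<longleftrightarrow> \<not> p dvd x \<or> int n dvd 2 * int x + int a"
      proof
        assume "Rel x ((x + a) mod n)"
        then show "\<not> p dvd x \<or> int n dvd 2 * int x + int a" using Rel_shift[OF assms(1,2) xn] by auto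
      next
        assume c: "\<not> p dvd x \<or> int n dvd 2 * int x + int a"
        show "Rel x ((x + a) mod n)"
        proof (cases "p dvd x")
          case True
          then have "int n dvd 2 * int x + int a" using c by simp
          then show ?thesis using Rel_shift[OF assms(1,2) xn] True by simp
        next
          case False
          have "\<not> int p dvd int x + int a"
          proof
            assume "int p dvd int x + int a"
            moreover have "int p dvd int a" using pa by simp
            ultimately have "int p dvd (int x + int a) - int a" by (rule dvd_diff)
            then show False using False by simp
          qed
          then show ?thesis using Rel_shift[OF assms(1,2) xn] False qa by simp
        qed
      qed
      then show ?thesis using xn unfolding A2_def by simp
    qed
  qed
  moreover have dj: "A2 \<inter> {x. x < n \<and> int n dvd 2 * int x + int a} = {}"
    using n_dvd_2xa pa unfolding A2_def by blast
  moreover have f1: "finite A2" unfolding A2_def by simp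
  moreover have f2: "finite {x. x < n \<and> int n dvd 2 * int x + int a}" by simp
  ultimately show ?thesis using card_Un_disjoint[OF f1 f2 dj] card_A2 card_n_set[of a] by simp
qed

end


theorem theorem3p6:
  fixes p k :: nat and h :: "nat set \<Rightarrow> nat"
  assumes "prime p" and "odd p" and "k > 2"
    and "bij_betw h (cosets_D (p ^ k) (cyc_subgroup (p ^ k) (p ^ (k - 1) - 1)))
           {0..<card (cosets_D (p ^ k) (cyc_subgroup (p ^ k) (p ^ (k - 1) - 1)))}"
  shows "zero_difference_fun (p ^ k) ((2 * p ^ (k - 1) - p ^ (k - 2) + 1) div 2)
           {1, p, p ^ k - p ^ (k - 1) + 1}
           (coset_index_fun (p ^ k) (cyc_subgroup (p ^ k) (p ^ (k - 1) - 1)) h)"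
proof -
  define n where "n = p ^ k"
  define q where "q = p ^ (k - 1)"
  define r where "r = p ^ (k - 2)"
  interpret Z: zd p k n q r
    by unfold_locales (use assms in \<open>auto simp: n_def q_def r_def\<close>)
  define G where "G = cyc_subgroup n (q - 1)"
  define f where "f = coset_index_fun n G h"
  have inj: "inj_on h (cosets_D n G)" using assms(4) unfolding G_def n_def q_def
    by (rule bij_betw_imp_inj_on)
  have cD: "cosets_D n G = Z.cls ` {0..<n}"
  proof -
    have "cosets_D n G = coset_of n G ` {0..<n}" unfolding cosets_D_def by auto
    also have "\<dots> = Z.cls ` {0..<n}"
      using Z.coset_eq unfolding G_def Z.cls_def by (intro image_cong) auto
    finally show ?thesis .
  qed
  have cmem: "x < n \<Longrightarrow> coset_of n G x \<in> cosets_D n G" for x unfolding cosets_D_def by auto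
  have ceq: "x < n \<Longrightarrow> coset_of n G x = Z.cls x" for x using Z.coset_eq unfolding G_def Z.cls_def by simp
  have feq: "f y = f x \<longleftrightarrow> Z.Rel x y" if "x < n" "y < n" for x y
  proof -
    have "f y = f x \<longleftrightarrow> coset_of n G y = coset_of n G x"
      unfolding f_def coset_index_fun_def using inj_on_eq_iff[OF inj cmem[OF that(2)] cmem[OF that(1)]] .
    also have "\<dots> \<longleftrightarrow> Z.cls x = Z.cls y" using ceq that by auto
    also have "\<dots> \<longleftrightarrow> Z.Rel x y" using Z.cls_eq_iff that by simp
    finally show ?thesis .
  qed
  have card_img: "card (f ` {0..<n}) = (2 * q - r + 1) div 2"
  proof -
    have "f ` {0..<n} = h ` (coset_of n G ` {0..<n})" unfolding f_def coset_index_fun_def by auto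
    also have "coset_of n G ` {0..<n} = cosets_D n G" unfolding cosets_D_def by auto
    finally have "card (f ` {0..<n}) = card (cosets_D n G)" using card_image[OF inj] by simp
    then show ?thesis using cD Z.card_C by simp
  qed
  have zd: "card {x \<in> {0..<n}. f ((x + a) mod n) = f x} \<in> {1, p, n - q + 1}"
    if a: "a \<in> {0..<n}" "a \<noteq> 0" for a
  proof -
    have a0: "0 < a" and an: "a < n" using a by auto
    have "{x \<in> {0..<n}. f ((x + a) mod n) = f x} = {x. x < n \<and> Z.Rel x ((x + a) mod n)}"
      using feq Z.npos by auto
    moreover have "card {x. x < n \<and> Z.Rel x ((x + a) mod n)} \<in> {1, p, n - q + 1}"
    proof (cases "p dvd a")
      case False then show ?thesis using Z.cnt1[OF a0 an] by simp
    next
      case True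
      show ?thesis
      proof (cases "q dvd a")
        case False then show ?thesis using Z.cnt2[OF a0 an True] by simp
      next
        case True then show ?thesis using Z.cnt3[OF a0 an] by simp
      qed
    qed
    ultimately show ?thesis by simp
  qed
  show ?thesis
    unfolding zero_difference_fun_def
    using card_img zd unfolding f_def G_def n_def q_def r_def by simp
qed


end
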